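(* Fix two disjoint sets of vertices $S_1,S_2\subseteq V_n$. Let $T$ be a uniformly random spanning tree of $K_n$. Then the random graphs $H_1 = \left(S_1, E(T)\cap \binom{S_1}{2}\right)$ and $H_2 = \left(S_2, E(T)\cap \binom{S_2}{2}\right)$ are independent.
   Context: $K_n$ is the complete graph on vertex set $V_n=\{v_1,\dots,v_n\}$; $\binom{S}{2}$ denotes the set of 2-element subsets of $S$. *)

theory Defs
  imports "HOL-Probability.Probability"
begin

definition Vn :: "nat \<Rightarrow> nat set" where
  "Vn n = {1..n}"

definition pairs :: "'a set \<Rightarrow> 'a set set" where
  "pairs S = {e. \<exists>u v. u \<in> S \<and> v \<in> S \<and> u \<noteq> v \<and> e = {u, v}}"

definition reach :: "'a set set \<Rightarrow> 'a \<Rightarrow> 'a \<Rightarrow> bool" where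
  "reach E = (\<lambda>u v. {u, v} \<in> E)\<^sup>*\<^sup>*"

text \<open>E is (the edge set of) a spanning tree of the complete graph on V:
  a subgraph that is connected on V and acyclic (no edge lies on a cycle,
  i.e. removing any edge disconnects its endpoints).\<close>
definition is_spanning_tree :: "'a set \<Rightarrow> 'a set set \<Rightarrow> bool" where
  "is_spanning_tree V E \<longleftrightarrow>
     E \<subseteq> pairs V \<and>
     (\<forall>u\<in>V. \<forall>v\<in>V. reach E u v) \<and>
     (\<forall>e\<in>E. \<forall>u v. e = {u, v} \<longrightarrow> \<not> reach (E - {e}) u v)"

definition spanning_trees :: "nat \<Rightarrow> nat set set set" where
  "spanning_trees n = {E. is_spanning_tree (Vn n) E}"

definition UST :: "nat \<Rightarrow> nat set set pmf" where
  "UST n = pmf_of_set (spanning_trees n)"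

end

theory Submission
  imports Defs
begin


definition prel :: "('a \<rightharpoonup> 'a) \<Rightarrow> ('a \<times> 'a) set" where
  "prel p = {(y,x). p x = Some y}"

definition pf :: "'a set \<Rightarrow> ('a \<rightharpoonup> 'a) \<Rightarrow> bool" where
  "pf V p \<longleftrightarrow> dom p \<subseteq> V \<and> ran p \<subseteq> V \<and> wf (prel p)"

definition rtree :: "'a set \<Rightarrow> ('a \<rightharpoonup> 'a) \<Rightarrow> bool" where
  "rtree V p \<longleftrightarrow> pf V p \<and> card (V - dom p) = 1"

definition Next :: "'a set \<Rightarrow> ('a \<rightharpoonup> 'a) \<Rightarrow> ('a \<rightharpoonup> 'a) set" where
  "Next V p = {q. rtree V q \<and> p \<subseteq>\<^sub>m q}"

definition subtr :: "('a \<rightharpoonup> 'a) \<Rightarrow> 'a \<Rightarrow> 'a set" where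
  "subtr p r = {x. (r, x) \<in> (prel p)\<^sup>*}"

lemma finite_maps_sub:
  assumes "finite V" shows "finite {m. dom m \<subseteq> V \<and> ran m \<subseteq> V}"
proof -
  have "{m. dom m \<subseteq> V \<and> ran m \<subseteq> V} = (\<Union>A\<in>Pow V. {m. dom m = A \<and> ran m \<subseteq> V})"
    by auto
  also have "finite \<dots>" using assms
    by (intro finite_UN_I) (auto intro: finite_set_of_finite_maps finite_subset)
  finally show ?thesis .
qed

lemma finite_Next: "finite V \<Longrightarrow> finite (Next V p)"
  by (rule finite_subset[OF _ finite_maps_sub]) (auto simp: Next_def rtree_def pf_def)

lemma prel_mono: "p \<subseteq>\<^sub>m q \<Longrightarrow> prel p \<subseteq> prel q"
  by (auto simp: prel_def map_le_def dom_def)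

lemma prel_upd: "p r = None \<Longrightarrow> prel (p(r \<mapsto> v)) = insert (v, r) (prel p)"
  by (auto simp: prel_def)

lemma prel_rtrancl_cases:
  "(a, x) \<in> (prel p)\<^sup>* \<Longrightarrow> x = a \<or> x \<in> dom p"
  by (erule rtranclE) (auto simp: prel_def)

lemma subtr_sub: "pf V p \<Longrightarrow> r \<in> V \<Longrightarrow> subtr p r \<subseteq> V"
  by (auto simp: subtr_def pf_def dest!: prel_rtrancl_cases)

lemma root_exists:
  assumes "pf V p" "x \<in> V" shows "\<exists>r\<in>V - dom p. (r, x) \<in> (prel p)\<^sup>*"
proof -
  have wf: "wf (prel p)" using assms by (simp add: pf_def)
  show ?thesis using assms(2)
  proof (induction x rule: wf_induct[OF wf])
    case (1 x)
    show ?case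
    proof (cases "x \<in> dom p")
      case False then show ?thesis using 1 by auto
    next
      case True
      then obtain y where y: "p x = Some y" by auto
      then have "y \<in> V" using assms(1) by (auto simp: pf_def ran_def)
      moreover have yx: "(y, x) \<in> prel p" using y by (simp add: prel_def)
      ultimately obtain r where "r \<in> V - dom p" "(r, y) \<in> (prel p)\<^sup>*" using 1 by blast
      then show ?thesis using yx by (meson rtrancl.rtrancl_into_rtrancl)
    qed
  qed
qed

lemma root_unique:
  assumes "(a, x) \<in> (prel p)\<^sup>*" "a \<notin> dom p"
  shows "(b, x) \<in> (prel p)\<^sup>* \<Longrightarrow> b \<notin> dom p \<Longrightarrow> a = b"
  using assms(1)
proof (induction arbitrary: b rule: rtrancl_induct)
  case base
  from base(1) show ?case
  proof (cases rule: rtranclE)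
    case (step c)
    then show ?thesis using assms(2) by (auto simp: prel_def)
  qed simp
next
  case (step y z)
  from step.prems(1) show ?case
  proof (cases rule: rtranclE)
    case base
    then show ?thesis using step.hyps(2) step.prems(2) by (auto simp: prel_def)
  next
    case (step c)
    then have "c = y" using \<open>(y, z) \<in> prel p\<close> by (auto simp: prel_def)
    then show ?thesis using step step.IH step.prems by blast
  qed
qed

lemma Next_base:
  assumes "pf V p" "card (V - dom p) = 1" "finite V"
  shows "Next V p = {p}"
proof -
  have "q = p" if q: "rtree V q" "p \<subseteq>\<^sub>m q" for q
  proof -
    have dpq: "dom p \<subseteq> dom q" using q(2) by (simp add: map_le_def dom_def subset_iff)
    have "V - dom q \<subseteq> V - dom p" using dpq by auto
    moreover have "card (V - dom q) = card (V - dom p)" using q(1) assms(2) by (simp add: rtree_def)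
    ultimately have "V - dom q = V - dom p" using assms(3) by (metis card_subset_eq finite_Diff)
    moreover have "dom q \<subseteq> V" "dom p \<subseteq> V" using q(1) assms(1) by (auto simp: rtree_def pf_def)
    ultimately have "dom q = dom p" by blast
    then have "q \<subseteq>\<^sub>m p" using q(2) by (auto simp: map_le_def)
    then show ?thesis using q(2) by (rule map_le_antisym)
  qed
  moreover have "rtree V p" using assms by (simp add: rtree_def)
  ultimately show ?thesis by (auto simp: Next_def)
qed

lemma map_le_dom: "p \<subseteq>\<^sub>m q \<Longrightarrow> dom p \<subseteq> dom q"
  by (simp add: map_le_def subset_iff) (metis domIff option.distinct(1))

lemma pf_upd:
  assumes "pf V p" "\<rho> \<in> V - dom p" "v \<in> V - subtr p \<rho>"
  shows "pf V (p(\<rho> \<mapsto> v))"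
proof -
  have "prel (p(\<rho> \<mapsto> v)) = insert (v, \<rho>) (prel p)" using assms(2) by (intro prel_upd) auto
  moreover have "(\<rho>, v) \<notin> (prel p)\<^sup>*" using assms(3) by (simp add: subtr_def)
  moreover have "wf (prel p)" using assms(1) by (simp add: pf_def)
  ultimately have "wf (prel (p(\<rho> \<mapsto> v)))" by simp
  moreover have "ran (p(\<rho> \<mapsto> v)) = insert v (ran p)" using assms(2) by (intro ran_map_upd) auto
  then have "ran (p(\<rho> \<mapsto> v)) \<subseteq> V" using assms(1,3) by (simp add: pf_def)
  moreover have "dom (p(\<rho> \<mapsto> v)) \<subseteq> V" using assms(1,2) by (simp add: pf_def)
  ultimately show ?thesis unfolding pf_def by (intro conjI)
qed

lemma sum_subtr:
  assumes "finite V" "pf V p"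
  shows "(\<Sum>\<rho>\<in>V - dom p. card (subtr p \<rho>)) = card V"
proof -
  have "V = (\<Union>\<rho>\<in>V - dom p. subtr p \<rho>)"
  proof
    show "V \<subseteq> (\<Union>\<rho>\<in>V - dom p. subtr p \<rho>)"
      using root_exists[OF assms(2)] by (auto simp: subtr_def)
    show "(\<Union>\<rho>\<in>V - dom p. subtr p \<rho>) \<subseteq> V" using subtr_sub[OF assms(2)] by auto
  qed
  moreover have "card (\<Union>\<rho>\<in>V - dom p. subtr p \<rho>) = (\<Sum>\<rho>\<in>V - dom p. card (subtr p \<rho>))"
  proof (rule card_UN_disjoint)
    show "finite (V - dom p)" using assms by simp
    show "\<forall>i\<in>V - dom p. finite (subtr p i)" using subtr_sub[OF assms(2)] assms(1)
      by (meson DiffD1 finite_subset)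
    show "\<forall>i\<in>V - dom p. \<forall>j\<in>V - dom p. i \<noteq> j \<longrightarrow> subtr p i \<inter> subtr p j = {}"
      using root_unique[of _ _ p] by (auto simp: subtr_def)
  qed
  ultimately show ?thesis by simp
qed

lemma Next_count:
  assumes "finite V" "pf V p" "card (V - dom p) = Suc k"
  shows "card (Next V p) = card V ^ k"
  using assms(2,3)
proof (induction k arbitrary: p)
  case 0
  then show ?case using Next_base[OF 0(1) _ assms(1)] by simp
next
  case (Suc k p)
  define R where "R = V - dom p"
  define n where "n = card V"
  have finR: "finite R" using assms(1) by (simp add: R_def)
  define L where "L = Sigma (Next V p) (\<lambda>q. R \<inter> dom q)"
  define Rt where "Rt = Sigma (Sigma R (\<lambda>\<rho>. V - subtr p \<rho>)) (\<lambda>(\<rho>,v). Next V (p(\<rho> \<mapsto> v)))"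
  have cardL: "card L = card (Next V p) * Suc k"
  proof -
    have "card L = (\<Sum>q\<in>Next V p. card (R \<inter> dom q))"
      unfolding L_def using finite_Next[OF assms(1)] finR by (subst card_SigmaI) auto
    also have "\<dots> = (\<Sum>q\<in>Next V p. Suc k)"
    proof (rule sum.cong[OF refl])
      fix q assume "q \<in> Next V p"
      then have q: "rtree V q" "p \<subseteq>\<^sub>m q" by (auto simp: Next_def)
      then obtain r where r: "V - dom q = {r}" by (auto simp: rtree_def card_1_singleton_iff)
      have "dom p \<subseteq> dom q" using q(2) by (rule map_le_dom)
      then have "r \<in> R" using r by (auto simp: R_def)
      moreover have "R \<inter> dom q = R - {r}" using r by (auto simp: R_def)
      ultimately show "card (R \<inter> dom q) = Suc k" using Suc.prems(2) finR by (simp add: R_def)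
    qed
    finally show ?thesis by simp
  qed
  have cardRt: "card Rt = Suc k * n * n ^ k"
  proof -
    have fin2: "finite (Sigma R (\<lambda>\<rho>. V - subtr p \<rho>))" using finR assms(1) by auto
    have "card Rt = (\<Sum>x\<in>Sigma R (\<lambda>\<rho>. V - subtr p \<rho>). card ((\<lambda>(\<rho>,v). Next V (p(\<rho> \<mapsto> v))) x))"
      unfolding Rt_def using fin2 finite_Next[OF assms(1)] by (subst card_SigmaI) auto
    also have "\<dots> = (\<Sum>x\<in>Sigma R (\<lambda>\<rho>. V - subtr p \<rho>). n ^ k)"
    proof (rule sum.cong[OF refl])
      fix x assume x: "x \<in> Sigma R (\<lambda>\<rho>. V - subtr p \<rho>)"
      then obtain \<rho> v where xe: "x = (\<rho>, v)" "\<rho> \<in> R" "v \<in> V - subtr p \<rho>" by auto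
      have pf': "pf V (p(\<rho> \<mapsto> v))" using pf_upd[OF Suc.prems(1)] xe by (auto simp: R_def)
      have "V - dom (p(\<rho> \<mapsto> v)) = R - {\<rho>}" by (auto simp: R_def)
      then have c: "card (V - dom (p(\<rho> \<mapsto> v))) = Suc k" using xe finR Suc.prems(2) by (simp add: R_def)
      show "card ((\<lambda>(\<rho>,v). Next V (p(\<rho> \<mapsto> v))) x) = n ^ k"
        using Suc.IH[OF pf' c] unfolding xe(1) n_def by (simp only: case_prod_conv)
    qed
    also have "\<dots> = card (Sigma R (\<lambda>\<rho>. V - subtr p \<rho>)) * n ^ k" by simp
    also have "card (Sigma R (\<lambda>\<rho>. V - subtr p \<rho>)) = (\<Sum>\<rho>\<in>R. card (V - subtr p \<rho>))"
      using finR assms(1) by (simp add: card_SigmaI)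
    also have "\<dots> = (\<Sum>\<rho>\<in>R. n - card (subtr p \<rho>))"
    proof (rule sum.cong[OF refl])
      fix \<rho> assume "\<rho> \<in> R"
      then have "subtr p \<rho> \<subseteq> V" using subtr_sub[OF Suc.prems(1)] by (auto simp: R_def)
      then show "card (V - subtr p \<rho>) = n - card (subtr p \<rho>)"
        using assms(1) by (simp add: n_def card_Diff_subset finite_subset)
    qed
    also have "\<dots> = (\<Sum>\<rho>\<in>R. n) - (\<Sum>\<rho>\<in>R. card (subtr p \<rho>))"
      using subtr_sub[OF Suc.prems(1)] assms(1)
      by (intro sum_subtractf_nat) (auto simp: R_def n_def intro!: card_mono)
    also have "\<dots> = Suc (Suc k) * n - n"
      using sum_subtr[OF assms(1) Suc.prems(1)] Suc.prems(2) by (simp add: R_def n_def)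
    also have "\<dots> = Suc k * n" by simp
    finally show ?thesis by simp
  qed
  have bij: "bij_betw (\<lambda>(q,\<rho>). ((\<rho>, the (q \<rho>)), q)) L Rt"
  proof (rule bij_betwI')
    fix a b assume "a \<in> L" "b \<in> L"
    then show "((\<lambda>(q,\<rho>). ((\<rho>, the (q \<rho>)), q)) a = (\<lambda>(q,\<rho>). ((\<rho>, the (q \<rho>)), q)) b) = (a = b)"
      by (cases a; cases b) auto
  next
    fix a assume "a \<in> L"
    then obtain q \<rho> where a: "a = (q, \<rho>)" "q \<in> Next V p" "\<rho> \<in> R" "\<rho> \<in> dom q"
      by (auto simp: L_def)
    then obtain v where v: "q \<rho> = Some v" by auto
    have q: "rtree V q" "p \<subseteq>\<^sub>m q" using a by (auto simp: Next_def)
    have "v \<in> V" using q(1) v by (auto simp: rtree_def pf_def ran_def)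
    moreover have "v \<notin> subtr p \<rho>"
    proof
      assume "v \<in> subtr p \<rho>"
      then have "(\<rho>, v) \<in> (prel q)\<^sup>*" using prel_mono[OF q(2)] rtrancl_mono by (auto simp: subtr_def)
      moreover have "(v, \<rho>) \<in> prel q" using v by (simp add: prel_def)
      moreover have "wf (prel q)" using q(1) by (simp add: rtree_def pf_def)
      ultimately show False by (metis insert_absorb wf_insert)
    qed
    moreover have "p(\<rho> \<mapsto> v) \<subseteq>\<^sub>m q" using q(2) v by (auto simp: map_le_def)
    ultimately show "(\<lambda>(q,\<rho>). ((\<rho>, the (q \<rho>)), q)) a \<in> Rt"
      using a v q by (auto simp: Rt_def Next_def)
  next
    fix b assume "b \<in> Rt"
    then obtain \<rho> v q where b: "b = ((\<rho>, v), q)" "\<rho> \<in> R" "rtree V q" "p(\<rho> \<mapsto> v) \<subseteq>\<^sub>m q"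
      by (auto simp: Rt_def Next_def)
    have qr: "q \<rho> = Some v" using b(4) by (auto simp: map_le_def)
    have "p \<subseteq>\<^sub>m p(\<rho> \<mapsto> v)" using b(2) by (auto simp: map_le_def R_def)
    then have "p \<subseteq>\<^sub>m q" using b(4) by (rule map_le_trans)
    then have "(q, \<rho>) \<in> L" using b qr by (auto simp: L_def Next_def)
    moreover have "b = (\<lambda>(q,\<rho>). ((\<rho>, the (q \<rho>)), q)) (q, \<rho>)" using b qr by simp
    ultimately show "\<exists>a\<in>L. b = (\<lambda>(q,\<rho>). ((\<rho>, the (q \<rho>)), q)) a" by blast
  qed
  have "card L = card Rt" using bij by (rule bij_betw_same_card)
  then have "card (Next V p) * Suc k = Suc k * (n * n ^ k)" using cardL cardRt by (metis mult.assoc)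
  then have "card (Next V p) = n * n ^ k" by (metis mult.commute nat.distinct(1) mult_left_cancel)
  then show ?case by (simp add: n_def)
qed



definition pedges :: "('a \<rightharpoonup> 'a) \<Rightarrow> 'a set set" where
  "pedges p = {{x, y} | x y. p x = Some y}"

lemma reach_sym: "reach E u v \<Longrightarrow> reach E v u"
  unfolding reach_def
proof (induction rule: rtranclp_induct)
  case base then show ?case by simp
next
  case (step y z)
  then have "{z, y} \<in> E" by (simp add: insert_commute)
  then show ?case using step.IH by (meson converse_rtranclp_into_rtranclp)
qed

lemma reach_mono: "E \<subseteq> E' \<Longrightarrow> reach E u v \<Longrightarrow> reach E' u v"
  unfolding reach_def by (erule rtranclp_mono[THEN predicate2D, rotated]) auto

lemma reach_edge: "{u, v} \<in> E \<Longrightarrow> reach E u v"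
  unfolding reach_def by auto

lemma reach_trans: "reach E u v \<Longrightarrow> reach E v w \<Longrightarrow> reach E u w"
  unfolding reach_def by (rule rtranclp_trans)

lemma wf_prel_irrefl: "wf (prel q) \<Longrightarrow> q x = Some y \<Longrightarrow> x \<noteq> y"
  using wf_not_refl[of "prel q" x] by (auto simp: prel_def)

lemma wf_prel_asym: "wf (prel q) \<Longrightarrow> q x = Some y \<Longrightarrow> q y = Some x \<Longrightarrow> False"
  using wf_not_sym[of "prel q" y x] by (auto simp: prel_def)

lemma rtree_spanning:
  assumes "rtree V q"
  shows "is_spanning_tree V (pedges q)"
proof -
  have pf: "pf V q" and c: "card (V - dom q) = 1" using assms by (auto simp: rtree_def)
  then obtain r where r: "V - dom q = {r}" by (auto simp: card_1_singleton_iff)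
  have wf: "wf (prel q)" using pf by (simp add: pf_def)
  let ?E = "pedges q"
  have sub: "?E \<subseteq> pairs V"
  proof
    fix e assume "e \<in> ?E"
    then obtain x y where e: "e = {x, y}" "q x = Some y" by (auto simp: pedges_def)
    then have "x \<in> V" "y \<in> V" using pf by (auto simp: pf_def ran_def)
    moreover have "x \<noteq> y" using wf_prel_irrefl[OF wf e(2)] .
    ultimately show "e \<in> pairs V" using e by (auto simp: pairs_def)
  qed
  have toroot: "reach ?E x r" if "x \<in> V" for x
    using that
  proof (induction x rule: wf_induct[OF wf])
    case (1 x)
    show ?case
    proof (cases "x \<in> dom q")
      case False then show ?thesis using 1 r by (auto simp: reach_def)
    next
      case True
      then obtain y where y: "q x = Some y" by auto
      then have "y \<in> V" using pf by (auto simp: pf_def ran_def)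
      moreover have "(y, x) \<in> prel q" using y by (simp add: prel_def)
      ultimately have "reach ?E y r" using 1 by blast
      moreover have "{x, y} \<in> ?E" using y by (auto simp: pedges_def)
      ultimately show ?thesis by (meson reach_edge reach_trans)
    qed
  qed
  have conn: "\<forall>u\<in>V. \<forall>v\<in>V. reach ?E u v"
    using toroot reach_sym reach_trans by metis
  have acyc: "\<not> reach (?E - {e}) u v" if ein: "e \<in> ?E" and euv: "e = {u, v}" for e u v
  proof -
    obtain x y where e: "e = {x, y}" "q x = Some y" using ein unfolding pedges_def by blast
    define D where "D = {z. (x, z) \<in> (prel q)\<^sup>*}"
    have closed: "w \<in> D" if "reach (?E - {e}) x w" for w
      using that unfolding reach_def
    proof (induction rule: rtranclp_induct)
      case base then show ?case by (simp add: D_def)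
    next
      case (step w w')
      from step.hyps(2) have "{w, w'} \<in> ?E" "{w, w'} \<noteq> e" by auto
      then obtain a b where ab: "{w, w'} = {a, b}" "q a = Some b" "{a, b} \<noteq> {x, y}"
        unfolding pedges_def e(1) by blast
      have ax: "a \<noteq> x"
      proof
        assume "a = x"
        then have "b = y" using ab(2) e(2) by simp
        then show False using ab(3) \<open>a = x\<close> by simp
      qed
      from ab(1) have "(a = w \<and> b = w') \<or> (a = w' \<and> b = w)" by (auto simp: doubleton_eq_iff)
      then show ?case
      proof
        assume h: "a = w \<and> b = w'"
        have "(x, w) \<in> (prel q)\<^sup>*" using step.IH by (simp add: D_def)
        then show ?thesis
        proof (cases rule: rtranclE)
          case base then show ?thesis using h ax by simp
        next
          case (step c)
          then have "c = w'" using h ab(2) by (simp add: prel_def)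
          then show ?thesis using step by (simp add: D_def)
        qed
      next
        assume h: "a = w' \<and> b = w"
        then have "(w, w') \<in> prel q" using ab(2) by (simp add: prel_def)
        then show ?thesis using step.IH by (auto simp: D_def)
      qed
    qed
    have "y \<notin> D"
    proof
      assume "y \<in> D"
      then have "(x, y) \<in> (prel q)\<^sup>*" by (simp add: D_def)
      moreover have "(y, x) \<in> prel q" using e by (simp add: prel_def)
      ultimately show False using wf by (metis insert_absorb wf_insert)
    qed
    then have nxy: "\<not> reach (?E - {e}) x y" using closed by blast
    from euv e have "(u = x \<and> v = y) \<or> (u = y \<and> v = x)" by (auto simp: doubleton_eq_iff)
    then show ?thesis
    proof
      assume "u = x \<and> v = y" then show ?thesis using nxy by simp
    next
      assume h: "u = y \<and> v = x"
      show ?thesis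
      proof
        assume "reach (?E - {e}) u v"
        then have "reach (?E - {e}) x y" using h reach_sym by fastforce
        then show False using nxy by simp
      qed
    qed
  qed
  have acyc': "\<forall>e\<in>?E. \<forall>u v. e = {u, v} \<longrightarrow> \<not> reach (?E - {e}) u v" using acyc by blast
  show ?thesis unfolding is_spanning_tree_def using sub conn acyc' by (intro conjI) assumption+
qed

lemma pedges_inj:
  assumes "wf (prel q1)" "wf (prel q2)" "dom q1 = dom q2" "pedges q1 = pedges q2"
  shows "q1 = q2"
proof
  fix x show "q1 x = q2 x"
  proof (induction x rule: wf_induct[OF assms(1)])
    case (1 x)
    show ?case
    proof (cases "x \<in> dom q1")
      case False
      then have "q1 x = None" "q2 x = None" using assms(3) by auto
      then show ?thesis by simp
    next
      case True
      then obtain y where y: "q1 x = Some y" by auto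
      then have "(y, x) \<in> prel q1" by (simp add: prel_def)
      then have IH: "q1 y = q2 y" using 1 by blast
      have "{x, y} \<in> pedges q1" unfolding pedges_def using y by blast
      then have "{x, y} \<in> pedges q2" using assms(4) by simp
      then obtain a b where ab: "{x, y} = {a, b}" "q2 a = Some b" unfolding pedges_def by blast
      then have "(a = x \<and> b = y) \<or> (a = y \<and> b = x)" using doubleton_eq_iff[of x y a b] by blast
      then show ?thesis
      proof
        assume "a = x \<and> b = y" then show ?thesis using ab y by simp
      next
        assume "a = y \<and> b = x"
        then have "q1 y = Some x" using ab IH by simp
        then show ?thesis using wf_prel_asym[OF assms(1) y] by blast
      qed
    qed
  qed
qed

lemma crossing_edge:
  assumes "reach E a x" "a \<in> W" "x \<notin> W"
  shows "\<exists>u w. {w, u} \<in> E \<and> w \<in> W \<and> u \<notin> W"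
  using assms unfolding reach_def
proof (induction rule: rtranclp_induct)
  case base then show ?case by simp
next
  case (step y z)
  then show ?case by (cases "y \<in> W") auto
qed

lemma grow:
  assumes "is_spanning_tree V E" "r \<in> V" "finite V" "k < card V"
  shows "\<exists>W q. r \<in> W \<and> W \<subseteq> V \<and> card W = Suc k \<and> pf V q \<and> dom q = W - {r} \<and> ran q \<subseteq> W \<and> pedges q \<subseteq> E"
  using assms(4)
proof (induction k)
  case 0
  have "pf V Map.empty" by (simp add: pf_def prel_def)
  moreover have "pedges Map.empty \<subseteq> E" by (simp add: pedges_def)
  ultimately show ?case using assms(2)
    by (intro exI[of _ "{r}"] exI[of _ Map.empty]) simp
next
  case (Suc k)
  then obtain W q where W: "r \<in> W" "W \<subseteq> V" "card W = Suc k" "pf V q" "dom q = W - {r}" "ran q \<subseteq> W" "pedges q \<subseteq> E"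
    by auto
  have "W \<noteq> V" using W(3) Suc.prems by auto
  then obtain x where x: "x \<in> V" "x \<notin> W" using W(2) by blast
  have "reach E r x" using assms(1,2) x by (auto simp: is_spanning_tree_def)
  then obtain u w where uw: "{w, u} \<in> E" "w \<in> W" "u \<notin> W" using crossing_edge[OF \<open>reach E r x\<close> W(1) x(2)] by blast
  have uV: "u \<in> V" using uw(1) assms(1) by (auto simp: is_spanning_tree_def pairs_def doubleton_eq_iff)
  define q' where "q' = q(u \<mapsto> w)"
  have qu: "q u = None" using W(5) uw(3) by auto
  have "(u, w) \<notin> (prel q)\<^sup>*"
  proof
    assume "(u, w) \<in> (prel q)\<^sup>*"
    then show False
    proof (cases rule: converse_rtranclE)
      case base then show ?thesis using uw by auto
    next
      case (step c)
      then have "u \<in> ran q" by (auto simp: prel_def ran_def)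
      then show ?thesis using W(6) uw(3) by auto
    qed
  qed
  then have pf': "pf V q'" using W(4) qu prel_upd[of q u w, OF qu] uV W(2) uw(2)
    by (auto simp: pf_def q'_def ran_def)
  show ?case
  proof (rule exI[of _ "insert u W"], rule exI[of _ q'], intro conjI)
    show "card (insert u W) = Suc (Suc k)" using W(3) uw(3) W(2) assms(3) by (simp add: finite_subset)
    show "dom q' = insert u W - {r}" using W(5) W(1) uw(3) by (auto simp: q'_def)
    show "ran q' \<subseteq> insert u W" using W(6) qu uw(2) by (auto simp: q'_def ran_def)
    show "pedges q' \<subseteq> E" using W(7) uw(1) by (auto simp: q'_def pedges_def insert_commute)
    show "r \<in> insert u W" using W(1) by simp
    show "insert u W \<subseteq> V" using W(2) uV by simp
    show "pf V q'" by (rule pf')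
  qed
qed

lemma spanning_rtree:
  assumes "is_spanning_tree V E" "r \<in> V" "finite V"
  shows "\<exists>q. rtree V q \<and> dom q = V - {r} \<and> pedges q = E"
proof -
  have c0: "card V > 0" using assms(2,3) card_gt_0_iff by blast
  then have "card V - 1 < card V" by simp
  then obtain W q where W: "r \<in> W" "W \<subseteq> V" "card W = Suc (card V - 1)" "pf V q" "dom q = W - {r}" "pedges q \<subseteq> E"
    using grow[OF assms \<open>card V - 1 < card V\<close>] by blast
  have "card W = card V" using W(3) c0 by simp
  then have "W = V" using W(2) assms(3) by (simp add: card_subset_eq)
  then have dq: "dom q = V - {r}" using W(5) by simp
  then have rt: "rtree V q" using W(4) assms(2) by (simp add: rtree_def Diff_Diff_Int Int_absorb1)
  have "E \<subseteq> pedges q"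
  proof
    fix e assume e: "e \<in> E"
    then obtain u v where uv: "e = {u, v}" "u \<in> V" "v \<in> V" using assms(1) by (auto simp: is_spanning_tree_def pairs_def)
    show "e \<in> pedges q"
    proof (rule ccontr)
      assume "e \<notin> pedges q"
      then have "pedges q \<subseteq> E - {e}" using W(6) by auto
      moreover have "reach (pedges q) u v" using rtree_spanning[OF rt] uv by (auto simp: is_spanning_tree_def)
      ultimately have "reach (E - {e}) u v" by (rule reach_mono)
      then show False using assms(1) e uv(1) by (auto simp: is_spanning_tree_def)
    qed
  qed
  then show ?thesis using rt dq W(6) by blast
qed



definition tcount :: "'a set \<Rightarrow> 'a set set \<Rightarrow> nat" where
  "tcount V F = card {E. is_spanning_tree V E \<and> F \<subseteq> E}"

definition Orient :: "'a set \<Rightarrow> 'a set set \<Rightarrow> ('a \<rightharpoonup> 'a) set" where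
  "Orient V F = {p. pf V p \<and> pedges p = F}"

lemma finite_pairs: "finite V \<Longrightarrow> finite (pairs V)"
  by (rule finite_subset[of _ "Pow V"]) (auto simp: pairs_def)

lemma finite_ST: "finite V \<Longrightarrow> finite {E. is_spanning_tree V E \<and> P E}"
  by (rule finite_subset[of _ "Pow (pairs V)"]) (auto simp: is_spanning_tree_def finite_pairs)

lemma finite_Orient: "finite V \<Longrightarrow> finite (Orient V F)"
  by (rule finite_subset[OF _ finite_maps_sub]) (auto simp: Orient_def pf_def)

lemma count_rooted:
  assumes "finite V"
  shows "card {q. rtree V q \<and> F \<subseteq> pedges q} = tcount V F * card V"
proof -
  let ?A = "{q. rtree V q \<and> F \<subseteq> pedges q}"
  let ?B = "{E. is_spanning_tree V E \<and> F \<subseteq> E} \<times> ((\<lambda>r. V - {r}) ` V)"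
  have bij: "bij_betw (\<lambda>q. (pedges q, dom q)) ?A ?B"
  proof (rule bij_betwI')
    fix q1 q2 assume "q1 \<in> ?A" "q2 \<in> ?A"
    then have w: "wf (prel q1)" "wf (prel q2)" by (simp_all add: rtree_def pf_def)
    show "((pedges q1, dom q1) = (pedges q2, dom q2)) = (q1 = q2)"
    proof
      assume "(pedges q1, dom q1) = (pedges q2, dom q2)"
      then show "q1 = q2" using pedges_inj[OF w] by simp
    qed simp
  next
    fix q assume q: "q \<in> ?A"
    then have rt: "rtree V q" by simp
    then obtain r where r: "V - dom q = {r}" by (auto simp: rtree_def card_1_singleton_iff)
    have "dom q \<subseteq> V" using rt by (simp add: rtree_def pf_def)
    then have "dom q = V - {r}" "r \<in> V" using r by auto
    then show "(pedges q, dom q) \<in> ?B" using rtree_spanning[OF rt] q by auto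
  next
    fix b assume "b \<in> ?B"
    then obtain E r where b: "b = (E, V - {r})" "is_spanning_tree V E" "F \<subseteq> E" "r \<in> V" by auto
    then obtain q where "rtree V q" "dom q = V - {r}" "pedges q = E"
      using spanning_rtree[OF b(2) b(4) assms] by blast
    then show "\<exists>a\<in>?A. b = (pedges a, dom a)" using b by auto
  qed
  have "inj_on (\<lambda>r. V - {r}) V" by (rule inj_onI) auto
  then have "card ((\<lambda>r. V - {r}) ` V) = card V" by (rule card_image)
  then have "card ?B = tcount V F * card V" by (simp add: tcount_def card_cartesian_product)
  then show ?thesis using bij_betw_same_card[OF bij] by simp
qed

lemma card_dom_pedges:
  assumes "wf (prel p)" "finite (dom p)"
  shows "card (pedges p) = card (dom p)"
proof -
  have "pedges p = (\<lambda>x. {x, the (p x)}) ` dom p"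
  proof (intro equalityI subsetI)
    fix e assume "e \<in> pedges p"
    then obtain x y where xy: "e = {x, y}" "p x = Some y" unfolding pedges_def by blast
    then have "x \<in> dom p" "the (p x) = y" by auto
    then show "e \<in> (\<lambda>x. {x, the (p x)}) ` dom p" using xy(1) by blast
  next
    fix e assume "e \<in> (\<lambda>x. {x, the (p x)}) ` dom p"
    then obtain x where x: "x \<in> dom p" "e = {x, the (p x)}" by blast
    then have "p x = Some (the (p x))" by auto
    then show "e \<in> pedges p" unfolding pedges_def using x(2) by blast
  qed
  moreover have "inj_on (\<lambda>x. {x, the (p x)}) (dom p)"
  proof (rule inj_onI)
    fix x y assume xy: "x \<in> dom p" "y \<in> dom p" "{x, the (p x)} = {y, the (p y)}"
    show "x = y"
    proof (rule ccontr)
      assume "x \<noteq> y"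
      then have "y = the (p x)" "x = the (p y)" using xy(3) doubleton_eq_iff[of x "the (p x)" y "the (p y)"] by auto
      then have "p x = Some y" "p y = Some x" using xy(1,2) by auto
      then show False using wf_prel_asym[OF assms(1)] by blast
    qed
  qed
  ultimately show ?thesis by (simp add: card_image)
qed

lemma orient_restrict:
  assumes "p \<in> Orient V F" "p \<subseteq>\<^sub>m q" "wf (prel q)"
  shows "p = q |` {x. \<exists>y. q x = Some y \<and> {x, y} \<in> F}"
proof
  fix x
  show "p x = (q |` {x. \<exists>y. q x = Some y \<and> {x, y} \<in> F}) x"
  proof (cases "p x")
    case (Some y)
    then have "q x = Some y" using assms(2) by (auto simp: map_le_def dom_def)
    moreover have "{x, y} \<in> F" using assms(1) Some by (auto simp: Orient_def pedges_def)
    ultimately show ?thesis using Some by simp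
  next
    case None
    have "\<not> (\<exists>y. q x = Some y \<and> {x, y} \<in> F)"
    proof
      assume "\<exists>y. q x = Some y \<and> {x, y} \<in> F"
      then obtain y where y: "q x = Some y" "{x, y} \<in> F" by blast
      then have "{x, y} \<in> pedges p" using assms(1) by (simp add: Orient_def)
      then obtain a b where ab: "{x, y} = {a, b}" "p a = Some b" unfolding pedges_def by blast
      then have "(a = x \<and> b = y) \<or> (a = y \<and> b = x)" using doubleton_eq_iff[of x y a b] by blast
      then show False
      proof
        assume "a = x \<and> b = y" then show False using ab None by simp
      next
        assume "a = y \<and> b = x"
        then have "q y = Some x" using ab(2) assms(2) by (auto simp: map_le_def dom_def)
        then show False using wf_prel_asym[OF assms(3) y(1)] by blast
      qed
    qed
    then show ?thesis using None by simp
  qed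
qed

lemma rooted_decomp:
  assumes "finite V"
  shows "{q. rtree V q \<and> F \<subseteq> pedges q} = (\<Union>p\<in>Orient V F. Next V p)"
proof
  show "{q. rtree V q \<and> F \<subseteq> pedges q} \<subseteq> (\<Union>p\<in>Orient V F. Next V p)"
  proof
    fix q assume "q \<in> {q. rtree V q \<and> F \<subseteq> pedges q}"
    then have q: "rtree V q" "F \<subseteq> pedges q" by auto
    have pfq: "pf V q" using q(1) by (simp add: rtree_def)
    define D where "D = {x. \<exists>y. q x = Some y \<and> {x, y} \<in> F}"
    define p where "p = q |` D"
    have le: "p \<subseteq>\<^sub>m q" by (auto simp: p_def map_le_def restrict_map_def)
    have "prel p \<subseteq> prel q" by (rule prel_mono[OF le])
    moreover have "wf (prel q)" using pfq by (simp add: pf_def)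
    ultimately have "wf (prel p)" using wf_subset by blast
    moreover have "dom p \<subseteq> V"
    proof -
      have "dom q \<subseteq> V" using pfq by (simp add: pf_def)
      with map_le_dom[OF le] show ?thesis by (rule subset_trans)
    qed
    moreover have "ran p \<subseteq> V"
    proof
      fix y assume "y \<in> ran p"
      then have "y \<in> ran (q |` D)" by (simp add: p_def)
      then obtain x where "q x = Some y" using ran_restrictD by metis
      then have "y \<in> ran q" by (simp add: ranI)
      moreover have "ran q \<subseteq> V" using pfq by (simp add: pf_def)
      ultimately show "y \<in> V" by blast
    qed
    moreover have "pedges p = F"
    proof
      show "pedges p \<subseteq> F"
      proof
        fix e assume "e \<in> pedges p"
        then obtain x y where xy: "e = {x, y}" "p x = Some y" unfolding pedges_def by blast
        then have "x \<in> D" by (auto simp: p_def restrict_map_def split: if_splits)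
        then obtain y' where "q x = Some y'" "{x, y'} \<in> F" by (auto simp: D_def)
        moreover have "q x = Some y" using xy(2) \<open>x \<in> D\<close> by (simp add: p_def)
        ultimately show "e \<in> F" using xy(1) by simp
      qed
      show "F \<subseteq> pedges p"
      proof
        fix e assume "e \<in> F"
        then have "e \<in> pedges q" using q(2) by blast
        then obtain x y where "e = {x, y}" "q x = Some y" unfolding pedges_def by blast
        then have "p x = Some y" "e = {x, y}" using \<open>e \<in> F\<close> by (auto simp: p_def D_def)
        then show "e \<in> pedges p" unfolding pedges_def by blast
      qed
    qed
    ultimately have "p \<in> Orient V F" by (simp add: Orient_def pf_def)
    moreover have "q \<in> Next V p" using q(1) le by (simp add: Next_def)
    ultimately show "q \<in> (\<Union>p\<in>Orient V F. Next V p)" by blast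
  qed
next
  show "(\<Union>p\<in>Orient V F. Next V p) \<subseteq> {q. rtree V q \<and> F \<subseteq> pedges q}"
  proof
    fix q assume "q \<in> (\<Union>p\<in>Orient V F. Next V p)"
    then obtain p where p: "p \<in> Orient V F" "rtree V q" "p \<subseteq>\<^sub>m q" by (auto simp: Next_def)
    have "F \<subseteq> pedges q"
    proof
      fix e assume "e \<in> F"
      then have "e \<in> pedges p" using p(1) by (simp add: Orient_def)
      then obtain x y where "e = {x, y}" "p x = Some y" unfolding pedges_def by blast
      then have "e = {x, y}" "q x = Some y" using p(3) by (auto simp: map_le_def dom_def)
      then show "e \<in> pedges q" unfolding pedges_def by blast
    qed
    then show "q \<in> {q. rtree V q \<and> F \<subseteq> pedges q}" using p by simp
  qed
qed

lemma orient_dom_card: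
  assumes "finite V" "V \<noteq> {}" "p \<in> Orient V F"
  shows "card F = card (dom p)" "card (V - dom p) = Suc (card V - card F - 1)" "card F < card V"
proof -
  have pf: "pf V p" and pe: "pedges p = F" using assms(3) by (auto simp: Orient_def)
  have dV: "dom p \<subseteq> V" using pf by (simp add: pf_def)
  then have fd: "finite (dom p)" using assms(1) finite_subset by blast
  show cF: "card F = card (dom p)" using card_dom_pedges[of p] pf fd pe by (simp add: pf_def)
  obtain x where "x \<in> V" using assms(2) by blast
  then obtain r where "r \<in> V - dom p" using root_exists[OF pf] by blast
  then have "card (V - dom p) > 0" using assms(1) card_gt_0_iff by blast
  moreover have "card (V - dom p) = card V - card (dom p)" using dV assms(1) by (simp add: card_Diff_subset fd)
  ultimately show "card (V - dom p) = Suc (card V - card F - 1)" "card F < card V" using cF by auto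
qed

lemma count_formula:
  assumes "finite V" "V \<noteq> {}"
  shows "tcount V F * card V = card (Orient V F) * card V ^ (card V - card F - 1)"
proof -
  have "tcount V F * card V = card (\<Union>p\<in>Orient V F. Next V p)"
    using count_rooted[OF assms(1), of F] rooted_decomp[OF assms(1), of F] by simp
  also have "\<dots> = (\<Sum>p\<in>Orient V F. card (Next V p))"
  proof (rule card_UN_disjoint)
    show "finite (Orient V F)" using finite_Orient[OF assms(1)] .
    show "\<forall>i\<in>Orient V F. finite (Next V i)" using finite_Next[OF assms(1)] by blast
    show "\<forall>i\<in>Orient V F. \<forall>j\<in>Orient V F. i \<noteq> j \<longrightarrow> Next V i \<inter> Next V j = {}"
    proof (intro ballI impI)
      fix i j assume ij: "i \<in> Orient V F" "j \<in> Orient V F" "i \<noteq> j"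
      show "Next V i \<inter> Next V j = {}"
      proof (rule ccontr)
        assume "Next V i \<inter> Next V j \<noteq> {}"
        then obtain q where q: "rtree V q" "i \<subseteq>\<^sub>m q" "j \<subseteq>\<^sub>m q" by (auto simp: Next_def)
        have wq: "wf (prel q)" using q(1) by (simp add: rtree_def pf_def)
        have "i = j" using orient_restrict[OF ij(1) q(2) wq] orient_restrict[OF ij(2) q(3) wq] by simp
        then show False using ij(3) by simp
      qed
    qed
  qed
  also have "\<dots> = (\<Sum>p\<in>Orient V F. card V ^ (card V - card F - 1))"
  proof (rule sum.cong[OF refl])
    fix p assume p: "p \<in> Orient V F"
    have "pf V p" using p by (simp add: Orient_def)
    then show "card (Next V p) = card V ^ (card V - card F - 1)"
      using Next_count[OF assms(1)] orient_dom_card(2)[OF assms p] by blast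
  qed
  also have "\<dots> = card (Orient V F) * card V ^ (card V - card F - 1)" by simp
  finally show ?thesis .
qed



lemma pairs_mem: "{x, y} \<in> pairs S \<Longrightarrow> x \<in> S \<and> y \<in> S"
proof -
  assume "{x, y} \<in> pairs S"
  then obtain u v where uv: "u \<in> S" "v \<in> S" "{x, y} = {u, v}" unfolding pairs_def by blast
  from uv(3) have "(x = u \<and> y = v) \<or> (x = v \<and> y = u)" by (simp add: doubleton_eq_iff)
  then show ?thesis using uv(1,2) by blast
qed

lemma orient_sub:
  assumes "F \<subseteq> pairs S" "pedges p = F"
  shows "dom p \<subseteq> S" "ran p \<subseteq> S"
proof -
  have *: "x \<in> S \<and> y \<in> S" if "p x = Some y" for x y
  proof -
    have "{x, y} \<in> pedges p" unfolding pedges_def using that by blast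
    then have "{x, y} \<in> F" using assms(2) by simp
    then have "{x, y} \<in> pairs S" using assms(1) by (rule subsetD[rotated])
    then show ?thesis by (rule pairs_mem)
  qed
  show "dom p \<subseteq> S" using * by blast
  show "ran p \<subseteq> S" using * by (auto simp: ran_def)
qed

lemma restrict_le: "p |` S \<subseteq>\<^sub>m p"
  by (auto simp: map_le_def)

lemma pedges_restrict:
  assumes "pedges p = A \<union> B" "A \<subseteq> pairs S1" "B \<subseteq> pairs S2" "S1 \<inter> S2 = {}"
  shows "pedges (p |` S1) = A"
proof (intro equalityI subsetI)
  fix e assume "e \<in> pedges (p |` S1)"
  then obtain x y where xy: "e = {x, y}" "(p |` S1) x = Some y" unfolding pedges_def by blast
  then have x: "x \<in> S1" "p x = Some y" by (auto simp: restrict_map_def split: if_splits)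
  then have "e \<in> pedges p" unfolding pedges_def using xy(1) by blast
  then have "e \<in> A \<union> B" using assms(1) by simp
  moreover have "e \<notin> B"
  proof
    assume "e \<in> B"
    then have "{x, y} \<in> pairs S2" using assms(3) xy(1) by blast
    then have "x \<in> S2" using pairs_mem[of x y S2] by simp
    then show False using x(1) assms(4) by blast
  qed
  ultimately show "e \<in> A" by blast
next
  fix e assume e: "e \<in> A"
  then have "e \<in> pedges p" using assms(1) by blast
  then obtain x y where xy: "e = {x, y}" "p x = Some y" unfolding pedges_def by blast
  have "{x, y} \<in> pairs S1" using e xy(1) assms(2) by blast
  then have "x \<in> S1" using pairs_mem[of x y S1] by simp
  then have "(p |` S1) x = Some y" using xy(2) by simp
  then show "e \<in> pedges (p |` S1)" unfolding pedges_def using xy(1) by blast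
qed

lemma pf_restrict:
  assumes "pf V p" shows "pf V (p |` S)"
proof -
  have "prel (p |` S) \<subseteq> prel p" by (rule prel_mono[OF restrict_le])
  moreover have "wf (prel p)" using assms by (simp add: pf_def)
  ultimately have "wf (prel (p |` S))" using wf_subset by blast
  moreover have "dom (p |` S) \<subseteq> V" using assms by (auto simp: pf_def)
  moreover have "ran (p |` S) \<subseteq> V"
  proof
    fix y assume "y \<in> ran (p |` S)"
    then obtain x where "p x = Some y" using ran_restrictD by metis
    then have "y \<in> ran p" by (simp add: ranI)
    then show "y \<in> V" using assms by (auto simp: pf_def)
  qed
  ultimately show ?thesis by (simp add: pf_def)
qed

lemma orient_mult:
  assumes A: "A \<subseteq> pairs S1" and B: "B \<subseteq> pairs S2" and S: "S1 \<inter> S2 = {}"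
  shows "card (Orient V (A \<union> B)) = card (Orient V A) * card (Orient V B)"
proof -
  have S': "S2 \<inter> S1 = {}" using S by blast
  have bij: "bij_betw (\<lambda>p. (p |` S1, p |` S2)) (Orient V (A \<union> B)) (Orient V A \<times> Orient V B)"
  proof (rule bij_betwI')
    fix p p' assume p: "p \<in> Orient V (A \<union> B)" and p': "p' \<in> Orient V (A \<union> B)"
    have "pairs S1 \<subseteq> pairs (S1 \<union> S2)" "pairs S2 \<subseteq> pairs (S1 \<union> S2)" unfolding pairs_def by blast+
    then have AB: "A \<union> B \<subseteq> pairs (S1 \<union> S2)" using A B by blast
    have d: "dom p \<subseteq> S1 \<union> S2" "dom p' \<subseteq> S1 \<union> S2"
      using orient_sub(1)[OF AB] p p' by (auto simp: Orient_def)
    show "((p |` S1, p |` S2) = (p' |` S1, p' |` S2)) = (p = p')"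
    proof
      assume eq: "(p |` S1, p |` S2) = (p' |` S1, p' |` S2)"
      show "p = p'"
      proof
        fix x
        show "p x = p' x"
        proof (cases "x \<in> S1")
          case True
          from eq have "p |` S1 = p' |` S1" by simp
          then have "(p |` S1) x = (p' |` S1) x" by simp
          then show ?thesis using True by simp
        next
          case F1: False
          show ?thesis
          proof (cases "x \<in> S2")
            case True
            from eq have "p |` S2 = p' |` S2" by simp
            then have "(p |` S2) x = (p' |` S2) x" by simp
            then show ?thesis using True by simp
          next
            case False
            then have "x \<notin> dom p" "x \<notin> dom p'" using d F1 by auto
            then show ?thesis by (simp add: domIff)
          qed
        qed
      qed
    qed simp
  next
    fix p assume p: "p \<in> Orient V (A \<union> B)"
    then have pf: "pf V p" and pe: "pedges p = A \<union> B" by (auto simp: Orient_def)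
    have "pedges (p |` S1) = A" by (rule pedges_restrict[OF pe A B S])
    moreover have "pedges (p |` S2) = B" using pedges_restrict[of p B A S2 S1] pe B A S' by (simp add: Un_commute)
    ultimately show "(p |` S1, p |` S2) \<in> Orient V A \<times> Orient V B"
      using pf_restrict[OF pf] by (simp add: Orient_def)
  next
    fix pp assume "pp \<in> Orient V A \<times> Orient V B"
    then obtain p1 p2 where pp: "pp = (p1, p2)" "pf V p1" "pedges p1 = A" "pf V p2" "pedges p2 = B"
      by (auto simp: Orient_def)
    have d1: "dom p1 \<subseteq> S1" "ran p1 \<subseteq> S1" using orient_sub[OF A pp(3)] by auto
    have d2: "dom p2 \<subseteq> S2" "ran p2 \<subseteq> S2" using orient_sub[OF B pp(5)] by auto
    define p where "p = (\<lambda>x. if x \<in> S1 then p1 x else p2 x)"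
    have pS: "p x = Some y \<longleftrightarrow> p1 x = Some y \<or> p2 x = Some y" for x y
    proof -
      have "p1 x = Some y \<Longrightarrow> x \<in> S1" "p2 x = Some y \<Longrightarrow> x \<in> S2" using d1 d2 by auto
      then show ?thesis using S by (auto simp: p_def)
    qed
    have r1: "p |` S1 = p1"
    proof
      fix x show "(p |` S1) x = p1 x"
      proof (cases "x \<in> S1")
        case True then show ?thesis by (simp add: p_def)
      next
        case False
        then have "x \<notin> dom p1" using d1 by blast
        then show ?thesis using False by (simp add: domIff)
      qed
    qed
    have r2: "p |` S2 = p2"
    proof
      fix x show "(p |` S2) x = p2 x"
      proof (cases "x \<in> S2")
        case True
        then have "x \<notin> S1" using S by blast
        then show ?thesis using True by (simp add: p_def)
      next
        case False
        then have "x \<notin> dom p2" using d2 by blast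
        then show ?thesis using False by (simp add: domIff)
      qed
    qed
    have prel_p: "prel p = prel p1 \<union> prel p2" using pS by (auto simp: prel_def)
    have "Domain (prel p1) \<subseteq> S1" using d1 by (auto simp: prel_def ran_def)
    moreover have "Range (prel p2) \<subseteq> S2" using d2 by (auto simp: prel_def)
    ultimately have "Domain (prel p1) \<inter> Range (prel p2) = {}" using S by blast
    moreover have "wf (prel p1)" "wf (prel p2)" using pp(2,4) by (simp_all add: pf_def)
    ultimately have "wf (prel p)" unfolding prel_p using wf_Un by blast
    moreover have "dom p \<subseteq> V"
    proof
      fix x assume "x \<in> dom p"
      then obtain y where "p x = Some y" by auto
      then have "x \<in> dom p1 \<or> x \<in> dom p2" using pS by auto
      then show "x \<in> V" using pp(2,4) by (auto simp: pf_def)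
    qed
    moreover have "ran p \<subseteq> V"
    proof
      fix y assume "y \<in> ran p"
      then obtain x where "p x = Some y" by (auto simp: ran_def)
      then have "y \<in> ran p1 \<or> y \<in> ran p2" using pS by (auto intro: ranI)
      then show "y \<in> V" using pp(2,4) by (auto simp: pf_def)
    qed
    moreover have "pedges p = A \<union> B"
    proof (intro equalityI subsetI)
      fix e assume "e \<in> pedges p"
      then obtain x y where xy: "e = {x, y}" "p x = Some y" unfolding pedges_def by blast
      then have "p1 x = Some y \<or> p2 x = Some y" using pS by blast
      then have "e \<in> pedges p1 \<or> e \<in> pedges p2" unfolding pedges_def using xy(1) by blast
      then show "e \<in> A \<union> B" using pp(3,5) by blast
    next
      fix e assume "e \<in> A \<union> B"
      then have "e \<in> pedges p1 \<or> e \<in> pedges p2" using pp(3,5) by blast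
      then obtain x y where xy: "e = {x, y}" "p1 x = Some y \<or> p2 x = Some y" unfolding pedges_def by blast
      then have "p x = Some y" using pS by blast
      then show "e \<in> pedges p" unfolding pedges_def using xy(1) by blast
    qed
    ultimately have "p \<in> Orient V (A \<union> B)" by (simp add: Orient_def pf_def)
    moreover have "pp = (p |` S1, p |` S2)" using r1 r2 pp(1) by simp
    ultimately show "\<exists>p\<in>Orient V (A \<union> B). pp = (p |` S1, p |` S2)" by blast
  qed
  show ?thesis using bij_betw_same_card[OF bij] by (simp add: card_cartesian_product)
qed

lemma Orient_empty: "Orient V {} = {Map.empty}"
proof -
  have "p = Map.empty" if "pedges p = {}" for p :: "'a \<rightharpoonup> 'a"
  proof
    fix x show "p x = None"
    proof (rule ccontr)
      assume "p x \<noteq> None"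
      then obtain y where "p x = Some y" by auto
      then have "{x, y} \<in> pedges p" unfolding pedges_def by blast
      then show False using that by simp
    qed
  qed
  moreover have "pf V Map.empty" by (simp add: pf_def prel_def)
  moreover have "pedges Map.empty = {}" by (simp add: pedges_def)
  ultimately show ?thesis unfolding Orient_def by blast
qed

lemma tcount_empty_pos:
  assumes "finite V" "V \<noteq> {}"
  shows "tcount V {} > 0"
proof -
  have "tcount V {} * card V = card V ^ (card V - 1)"
    using count_formula[OF assms, of "{}"] by (simp add: Orient_empty)
  moreover have "card V > 0" using assms card_gt_0_iff by blast
  ultimately show ?thesis by (cases "tcount V {} = 0") auto
qed

lemma arith_aux:
  fixes tAB t0 tA tB oA oB n a b :: nat
  assumes h1: "tAB * n = oA * oB * n ^ (n - (a + b) - 1)" and h2: "tA * n = oA * n ^ (n - a - 1)"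
    and h3: "tB * n = oB * n ^ (n - b - 1)" and h4: "t0 * n = n ^ (n - 1)" and lt: "a + b < n"
  shows "tAB * t0 = tA * tB"
proof -
  have n0: "n * n \<noteq> 0" using lt by simp
  have ex: "(n - (a + b) - 1) + (n - 1) = (n - a - 1) + (n - b - 1)" using lt by simp
  have "(tAB * t0) * (n * n) = (tAB * n) * (t0 * n)" by (simp only: ac_simps)
  also have "\<dots> = (oA * oB * n ^ (n - (a + b) - 1)) * n ^ (n - 1)" by (simp only: h1 h4)
  also have "\<dots> = oA * oB * (n ^ (n - (a + b) - 1) * n ^ (n - 1))" by (simp only: mult.assoc)
  also have "n ^ (n - (a + b) - 1) * n ^ (n - 1) = n ^ (n - a - 1) * n ^ (n - b - 1)"
    by (simp only: power_add[symmetric] ex)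
  also have "oA * oB * (n ^ (n - a - 1) * n ^ (n - b - 1)) = (oA * n ^ (n - a - 1)) * (oB * n ^ (n - b - 1))"
    by (simp only: ac_simps)
  also have "\<dots> = (tA * n) * (tB * n)" by (simp only: h2 h3)
  also have "\<dots> = (tA * tB) * (n * n)" by (simp only: ac_simps)
  finally show ?thesis using n0 by simp
qed
lemma tcount_mult:
  assumes V: "finite V" "V \<noteq> {}"
    and A: "A \<subseteq> pairs S1" and B: "B \<subseteq> pairs S2" and S: "S1 \<inter> S2 = {}"
    and fin: "finite A" "finite B"
  shows "tcount V (A \<union> B) * tcount V {} = tcount V A * tcount V B"
proof -
  define n where "n = card V"
  have n0: "n > 0" unfolding n_def using V by (simp add: card_gt_0_iff)
  have disj: "A \<inter> B = {}"
  proof (rule ccontr)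
    assume "A \<inter> B \<noteq> {}"
    then obtain e where "e \<in> A" "e \<in> B" by blast
    then have "e \<in> pairs S1" "e \<in> pairs S2" using A B by blast+
    from \<open>e \<in> pairs S1\<close> obtain x y where xy: "e = {x, y}" unfolding pairs_def by auto
    have "{x, y} \<in> pairs S1" "{x, y} \<in> pairs S2" using \<open>e \<in> pairs S1\<close> \<open>e \<in> pairs S2\<close> xy by simp_all
    then have "x \<in> S1" "x \<in> S2" using pairs_mem[of x y S1] pairs_mem[of x y S2] by simp_all
    then show False using S by blast
  qed
  have cAB: "card (A \<union> B) = card A + card B" using card_Un_disjoint[OF fin disj] .
  have fAB: "tcount V (A \<union> B) * n = card (Orient V A) * card (Orient V B) * n ^ (n - (card A + card B) - 1)"
    using count_formula[OF V, of "A \<union> B"] unfolding orient_mult[OF A B S, of V] cAB n_def[symmetric] by (simp only: mult.assoc)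
  have fA: "tcount V A * n = card (Orient V A) * n ^ (n - card A - 1)"
    using count_formula[OF V, of A] unfolding n_def .
  have fB: "tcount V B * n = card (Orient V B) * n ^ (n - card B - 1)"
    using count_formula[OF V, of B] unfolding n_def .
  have f0: "tcount V {} * n = n ^ (n - 1)"
    using count_formula[OF V, of "{}"] unfolding n_def Orient_empty by simp
  show ?thesis
  proof (cases "Orient V (A \<union> B) = {}")
    case True
    then have "card (Orient V A) * card (Orient V B) = 0" using orient_mult[OF A B S, of V] by simp
    then have "tcount V (A \<union> B) * n = 0" using fAB by simp
    then have z1: "tcount V (A \<union> B) = 0" using n0 by simp
    have "card (Orient V A) = 0 \<or> card (Orient V B) = 0" using \<open>card (Orient V A) * card (Orient V B) = 0\<close> by simp
    then have "tcount V A * n = 0 \<or> tcount V B * n = 0" using fA fB by auto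
    then have "tcount V A = 0 \<or> tcount V B = 0" using n0 by simp
    then show ?thesis using z1 by auto
  next
    case False
    then obtain p where "p \<in> Orient V (A \<union> B)" by blast
    then have "card (A \<union> B) < n" using orient_dom_card(3)[OF V] by (simp add: n_def)
    then have lt: "card A + card B < n" using cAB by simp
    show ?thesis by (rule arith_aux[OF fAB fA fB f0 lt])
  qed
qed



lemma gen_sigma:
  fixes P :: "'b set" and f :: "'b set \<Rightarrow> 'c"
  assumes "finite P"
  shows "{T. f (T \<inter> P) \<in> A} \<in> sigma_sets UNIV {{T. a \<subseteq> T} | a. a \<subseteq> P}"
proof -
  let ?G = "{{T. a \<subseteq> T} | a. a \<subseteq> P}"
  interpret sa: sigma_algebra UNIV "sigma_sets UNIV ?G" by (rule sigma_algebra_sigma_sets) simp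
  have base: "{T. a \<subseteq> T} \<in> sigma_sets UNIV ?G" if "a \<subseteq> P" for a
    by (rule sigma_sets.Basic) (use that in blast)
  have exact: "{T. T \<inter> P = c} \<in> sigma_sets UNIV ?G" if c: "c \<subseteq> P" for c
  proof -
    have "{T. T \<inter> P = c} = {T. c \<subseteq> T} - (\<Union>e\<in>P - c. {T. insert e c \<subseteq> T})"
      using c by blast
    moreover have "(\<Union>e\<in>P - c. {T. insert e c \<subseteq> T}) \<in> sigma_sets UNIV ?G"
      using assms c by (intro sa.finite_UN base) auto
    ultimately show ?thesis using base[OF c] by (simp add: sa.Diff)
  qed
  have eq: "{T. f (T \<inter> P) \<in> A} = (\<Union>c\<in>{c. c \<subseteq> P \<and> f c \<in> A}. {T. T \<inter> P = c})" by auto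
  have fin: "finite {c. c \<subseteq> P \<and> f c \<in> A}" using assms by simp
  show ?thesis unfolding eq by (rule sa.finite_UN[OF fin]) (use exact in blast)
qed

theorem lemma2p5:
  fixes n :: nat and S1 S2 :: "nat set"
  assumes "S1 \<subseteq> Vn n" and "S2 \<subseteq> Vn n" and "S1 \<inter> S2 = {}"
  shows "prob_space.indep_var (measure_pmf (UST n))
           (count_space UNIV) (\<lambda>T. (S1, T \<inter> pairs S1))
           (count_space UNIV) (\<lambda>T. (S2, T \<inter> pairs S2))"
proof -
  have PS: "prob_space (measure_pmf (UST n))" by (rule prob_space_measure_pmf)
  define V where "V = Vn n"
  define \<Omega> where "\<Omega> = spanning_trees n"
  have finV: "finite V" by (simp add: V_def Vn_def)
  have \<Omega>_eq: "\<Omega> = {E. is_spanning_tree V E \<and> {} \<subseteq> E}" by (simp add: \<Omega>_def spanning_trees_def V_def)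
  have fin\<Omega>: "finite \<Omega>" unfolding \<Omega>_eq by (rule finite_ST[OF finV])
  have card\<Omega>: "card \<Omega> = tcount V {}" unfolding \<Omega>_eq tcount_def ..
  have ne\<Omega>: "\<Omega> \<noteq> {}"
  proof (cases "V = {}")
    case True
    have "is_spanning_tree V {}" using True by (simp add: is_spanning_tree_def)
    then show ?thesis unfolding \<Omega>_eq by blast
  next
    case False
    then have "tcount V {} > 0" using tcount_empty_pos[OF finV] by blast
    then show ?thesis using card\<Omega> by auto
  qed
  have t0: "tcount V {} > 0" using card\<Omega> ne\<Omega> fin\<Omega> card_gt_0_iff by metis
  have probF: "measure (measure_pmf (UST n)) {T. F \<subseteq> T} = real (tcount V F) / real (tcount V {})" for F
  proof -
    have "measure (measure_pmf (UST n)) {T. F \<subseteq> T} = card (\<Omega> \<inter> {T. F \<subseteq> T}) / card \<Omega>"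
      unfolding UST_def \<Omega>_def[symmetric] using measure_pmf_of_set[OF ne\<Omega> fin\<Omega>] .
    moreover have "\<Omega> \<inter> {T. F \<subseteq> T} = {E. is_spanning_tree V E \<and> F \<subseteq> E}" unfolding \<Omega>_eq by blast
    ultimately show ?thesis using card\<Omega> by (simp add: tcount_def)
  qed
  have finS1: "finite S1" and finS2: "finite S2" using assms(1,2) finV V_def finite_subset by blast+
  define P1 where "P1 = pairs S1"
  define P2 where "P2 = pairs S2"
  have finP1: "finite P1" and finP2: "finite P2" using finite_pairs finS1 finS2 by (auto simp: P1_def P2_def)
  define G1 where "G1 = {{T :: nat set set. a \<subseteq> T} | a. a \<subseteq> P1}"
  define G2 where "G2 = {{T :: nat set set. a \<subseteq> T} | a. a \<subseteq> P2}"
  have mult: "tcount V (a \<union> b) * tcount V {} = tcount V a * tcount V b" if ab: "a \<subseteq> P1" "b \<subseteq> P2" for a b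
  proof (cases "V = {}")
    case True
    then have "S1 = {}" "S2 = {}" using assms(1,2) V_def by auto
    then have "a = {}" "b = {}" using ab by (auto simp: P1_def P2_def pairs_def)
    then show ?thesis by simp
  next
    case False
    show ?thesis
    proof (rule tcount_mult[OF finV False _ _ assms(3)])
      show "a \<subseteq> pairs S1" "b \<subseteq> pairs S2" using ab by (simp_all add: P1_def P2_def)
      show "finite a" "finite b" using ab finP1 finP2 finite_subset by blast+
    qed
  qed
  have indG: "prob_space.indep_set (measure_pmf (UST n)) G1 G2"
    unfolding prob_space.indep_sets2_eq[OF PS]
  proof (intro conjI ballI)
    show "G1 \<subseteq> sets (measure_pmf (UST n))" "G2 \<subseteq> sets (measure_pmf (UST n))" by simp_all
  next
    fix A B assume A: "A \<in> G1" and B: "B \<in> G2"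
    then obtain a b where ab: "A = {T. a \<subseteq> T}" "B = {T. b \<subseteq> T}" "a \<subseteq> P1" "b \<subseteq> P2"
      unfolding G1_def G2_def by blast
    have AB: "A \<inter> B = {T. a \<union> b \<subseteq> T}" using ab by blast
    have m: "real (tcount V (a \<union> b)) * real (tcount V {}) = real (tcount V a) * real (tcount V b)"
      using mult[OF ab(3,4)] by (metis of_nat_mult)
    have "measure (measure_pmf (UST n)) (A \<inter> B) = real (tcount V (a \<union> b)) / real (tcount V {})"
      unfolding AB by (rule probF)
    also have "\<dots> = (real (tcount V a) / real (tcount V {})) * (real (tcount V b) / real (tcount V {}))"
      using m t0 by (simp add: field_simps)
    also have "\<dots> = measure (measure_pmf (UST n)) A * measure (measure_pmf (UST n)) B"
      unfolding ab(1,2) probF ..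
    finally show "measure (measure_pmf (UST n)) (A \<inter> B) = measure (measure_pmf (UST n)) A * measure (measure_pmf (UST n)) B" .
  qed
  have stab1: "Int_stable G1" unfolding Int_stable_def G1_def
  proof (intro ballI)
    fix A B assume "A \<in> {{T :: nat set set. a \<subseteq> T} | a. a \<subseteq> P1}" "B \<in> {{T :: nat set set. a \<subseteq> T} | a. a \<subseteq> P1}"
    then obtain a b where "A = {T. a \<subseteq> T}" "B = {T. b \<subseteq> T}" "a \<subseteq> P1" "b \<subseteq> P1" by blast
    then have "A \<inter> B = {T. a \<union> b \<subseteq> T}" "a \<union> b \<subseteq> P1" by auto
    then show "A \<inter> B \<in> {{T :: nat set set. a \<subseteq> T} | a. a \<subseteq> P1}" by blast
  qed
  have stab2: "Int_stable G2" unfolding Int_stable_def G2_def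
  proof (intro ballI)
    fix A B assume "A \<in> {{T :: nat set set. a \<subseteq> T} | a. a \<subseteq> P2}" "B \<in> {{T :: nat set set. a \<subseteq> T} | a. a \<subseteq> P2}"
    then obtain a b where "A = {T. a \<subseteq> T}" "B = {T. b \<subseteq> T}" "a \<subseteq> P2" "b \<subseteq> P2" by blast
    then have "A \<inter> B = {T. a \<union> b \<subseteq> T}" "a \<union> b \<subseteq> P2" by auto
    then show "A \<inter> B \<in> {{T :: nat set set. a \<subseteq> T} | a. a \<subseteq> P2}" by blast
  qed
  have indS: "prob_space.indep_set (measure_pmf (UST n)) (sigma_sets UNIV G1) (sigma_sets UNIV G2)"
    using prob_space.indep_set_sigma_sets[OF PS indG stab1 stab2] by simp
  have gen1: "sigma_sets UNIV {(\<lambda>T. (S1, T \<inter> pairs S1)) -` A \<inter> UNIV | A. A \<in> sets (count_space UNIV)} \<subseteq> sigma_sets UNIV G1"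
  proof (rule sigma_sets_mono, rule subsetI)
    fix X assume "X \<in> {(\<lambda>T. (S1, T \<inter> pairs S1)) -` A \<inter> UNIV | A. A \<in> sets (count_space UNIV)}"
    then obtain A where "X = (\<lambda>T. (S1, T \<inter> pairs S1)) -` A \<inter> UNIV" by blast
    then have "X = {T. Pair S1 (T \<inter> P1) \<in> A}" by (auto simp: P1_def)
    then show "X \<in> sigma_sets UNIV G1" unfolding G1_def using gen_sigma[OF finP1, of "Pair S1" A] by simp
  qed
  have gen2: "sigma_sets UNIV {(\<lambda>T. (S2, T \<inter> pairs S2)) -` A \<inter> UNIV | A. A \<in> sets (count_space UNIV)} \<subseteq> sigma_sets UNIV G2"
  proof (rule sigma_sets_mono, rule subsetI)
    fix X assume "X \<in> {(\<lambda>T. (S2, T \<inter> pairs S2)) -` A \<inter> UNIV | A. A \<in> sets (count_space UNIV)}"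
    then obtain A where "X = (\<lambda>T. (S2, T \<inter> pairs S2)) -` A \<inter> UNIV" by blast
    then have "X = {T. Pair S2 (T \<inter> P2) \<in> A}" by (auto simp: P2_def)
    then show "X \<in> sigma_sets UNIV G2" unfolding G2_def using gen_sigma[OF finP2, of "Pair S2" A] by simp
  qed
  have ind_final: "prob_space.indep_set (measure_pmf (UST n))
      (sigma_sets UNIV {(\<lambda>T. (S1, T \<inter> pairs S1)) -` A \<inter> UNIV | A. A \<in> sets (count_space UNIV)})
      (sigma_sets UNIV {(\<lambda>T. (S2, T \<inter> pairs S2)) -` A \<inter> UNIV | A. A \<in> sets (count_space UNIV)})"
    using indS unfolding prob_space.indep_set_def[OF PS]
  proof (rule prob_space.indep_sets_mono_sets[OF PS])
    fix i :: bool show "case_bool (sigma_sets UNIV {(\<lambda>T. (S1, T \<inter> pairs S1)) -` A \<inter> UNIV | A. A \<in> sets (count_space UNIV)})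
      (sigma_sets UNIV {(\<lambda>T. (S2, T \<inter> pairs S2)) -` A \<inter> UNIV | A. A \<in> sets (count_space UNIV)}) i
      \<subseteq> case_bool (sigma_sets UNIV G1) (sigma_sets UNIV G2) i"
      using gen1 gen2 by (cases i) simp_all
  qed
  show ?thesis
    unfolding prob_space.indep_var_eq[OF PS]
    using ind_final by simp
qed

end
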